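(* Let $P$ be a positive, completely labelled causal logic program, $p$ an atom, $k\in\{1,2,\dots\}\cup\{\omega\}$ and $G$ a causal graph. If $G$ is a $\le$-maximal element of $T_P\!\uparrow\!k(p)$ and $\mathrm{height}(G)=h\le k$, then $G\in T_P\!\uparrow\!h(p)$.
   Context: Causal graphs: reflexively–transitively closed directed graphs on labels; $G\le G'$ iff $G\supseteq G'$; $G*G'=(G\cup G')^*$, $G\cdot G'$ the closure of the graph with vertices $V\cup V'$ and edges $E\cup E'\cup(V\times V')$. Causal values: down-sets of causal graphs; $*$ intersection, $+$ union, $U\cdot U'={\downarrow}\{G\cdot G'\}$; a label $l$ denotes ${\downarrow}$ of the graph with only edge $(l,l)$, $1$ all causal graphs, $0=\emptyset$. Rules $t:H\leftarrow B_1,\dots,B_n$; positive = no default negation; completely labelled = every rule has a label and labels are pairwise distinct. $T_P(I)(p)=\sum\{(I(B_1)*\dots*I(B_n))\cdot t\mid(t:p\leftarrow B_1,\dots,B_n)\in P\}$, $T_P\!\uparrow\!0=$ all atoms $0$, $T_P\!\uparrow\!(k+1)=T_P(T_P\!\uparrow\!k)$, $T_P\!\uparrow\!\omega(p)=\sum_{k<\omega}T_P\!\uparrow\!k(p)$. $\mathrm{height}(G)$ is the maximal number of vertices of a simple directed path (no repeated vertices) in $G$; a single-vertex graph has height $1$. *)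

theory Defs
  imports Main "HOL-Library.Extended_Nat"
begin

(* Causal graphs over labels 'l are represented by their edge relation.
   Since they are reflexively closed, the vertex set is the field. *)
type_synonym 'l cgraph = "('l \<times> 'l) set"
type_synonym 'l cvalue = "'l cgraph set"

definition causal_graph :: "'l cgraph \<Rightarrow> bool" where
  "causal_graph G \<longleftrightarrow> (\<forall>x\<in>Field G. (x, x) \<in> G) \<and> trans G"

definition cvertices :: "'l cgraph \<Rightarrow> 'l set" where
  "cvertices G = Field G"

definition cg_le :: "'l cgraph \<Rightarrow> 'l cgraph \<Rightarrow> bool" where
  "cg_le G G' \<longleftrightarrow> G' \<subseteq> G"

definition rt_close :: "'l set \<Rightarrow> ('l \<times> 'l) set \<Rightarrow> 'l cgraph" where
  "rt_close V E = E\<^sup>+ \<union> Id_on V"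

definition cg_star :: "'l cgraph \<Rightarrow> 'l cgraph \<Rightarrow> 'l cgraph" where
  "cg_star G G' = rt_close (cvertices G \<union> cvertices G') (G \<union> G')"

definition cg_dot :: "'l cgraph \<Rightarrow> 'l cgraph \<Rightarrow> 'l cgraph" where
  "cg_dot G G' = rt_close (cvertices G \<union> cvertices G')
                   (G \<union> G' \<union> (cvertices G \<times> cvertices G'))"

definition down :: "'l cgraph set \<Rightarrow> 'l cvalue" where
  "down S = {G. causal_graph G \<and> (\<exists>H\<in>S. cg_le G H)}"

definition cv_one :: "'l cvalue" where
  "cv_one = {G. causal_graph G}"

definition cv_zero :: "'l cvalue" where
  "cv_zero = {}"

definition cv_times :: "'l cvalue \<Rightarrow> 'l cvalue \<Rightarrow> 'l cvalue" where
  "cv_times U U' = U \<inter> U'"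

definition cv_prod :: "'l cvalue \<Rightarrow> 'l cvalue \<Rightarrow> 'l cvalue" where
  "cv_prod U U' = down {cg_dot G G' | G G'. G \<in> U \<and> G' \<in> U'}"

definition cv_label :: "'l \<Rightarrow> 'l cvalue" where
  "cv_label l = down {{(l, l)}}"

(* Rules t : H <- B_1,...,B_n, not C_1, ..., not C_m *)
datatype ('a, 'l) rule =
  Rule (rlabel: "'l option") (rhead: 'a) (rpos: "'a list") (rneg: "'a list")

type_synonym ('a, 'l) program = "('a, 'l) rule set"

definition positive :: "('a, 'l) program \<Rightarrow> bool" where
  "positive P \<longleftrightarrow> (\<forall>r\<in>P. rneg r = [])"

definition completely_labelled :: "('a, 'l) program \<Rightarrow> bool" where
  "completely_labelled P \<longleftrightarrow>
     (\<forall>r\<in>P. rlabel r \<noteq> None) \<and>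
     (\<forall>r\<in>P. \<forall>r'\<in>P. rlabel r = rlabel r' \<longrightarrow> r = r')"

type_synonym ('a, 'l) cinterp = "'a \<Rightarrow> 'l cvalue"

definition body_val :: "('a, 'l) cinterp \<Rightarrow> 'a list \<Rightarrow> 'l cvalue" where
  "body_val I bs = foldr (\<lambda>b U. cv_times (I b) U) bs cv_one"

definition rule_val :: "('a, 'l) cinterp \<Rightarrow> ('a, 'l) rule \<Rightarrow> 'l cvalue" where
  "rule_val I r = (case rlabel r of
       Some t \<Rightarrow> cv_prod (body_val I (rpos r)) (cv_label t)
     | None \<Rightarrow> body_val I (rpos r))"

definition TP :: "('a, 'l) program \<Rightarrow> ('a, 'l) cinterp \<Rightarrow> ('a, 'l) cinterp" where
  "TP P I p = \<Union> {rule_val I r | r. r \<in> P \<and> rhead r = p}"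

fun TP_iter :: "('a, 'l) program \<Rightarrow> nat \<Rightarrow> ('a, 'l) cinterp" where
  "TP_iter P 0 = (\<lambda>p. cv_zero)"
| "TP_iter P (Suc k) = TP P (TP_iter P k)"

definition TP_omega :: "('a, 'l) program \<Rightarrow> ('a, 'l) cinterp" where
  "TP_omega P p = (\<Union>k. TP_iter P k p)"

(* T_P up k for k \<in> {1,2,...} \<union> {\<omega>}; \<omega> is represented by \<infinity> *)
definition TP_up :: "('a, 'l) program \<Rightarrow> enat \<Rightarrow> ('a, 'l) cinterp" where
  "TP_up P k = (case k of enat n \<Rightarrow> TP_iter P n | \<infinity> \<Rightarrow> TP_omega P)"

definition cg_maximal_in :: "'l cgraph \<Rightarrow> 'l cvalue \<Rightarrow> bool" where
  "cg_maximal_in G U \<longleftrightarrow> G \<in> U \<and> (\<forall>G'\<in>U. cg_le G G' \<longrightarrow> cg_le G' G)"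

definition simple_path :: "'l cgraph \<Rightarrow> 'l list \<Rightarrow> bool" where
  "simple_path G vs \<longleftrightarrow> vs \<noteq> [] \<and> distinct vs \<and> set vs \<subseteq> cvertices G \<and>
                          successively (\<lambda>x y. (x, y) \<in> G) vs"

definition height :: "'l cgraph \<Rightarrow> enat" where
  "height G = Sup {enat (length vs) | vs. simple_path G vs}"

end

theory Submission
  imports Defs
begin

lemma Field_in: "(x,y) \<in> r \<Longrightarrow> x \<in> Field r \<and> y \<in> Field r"
  by (auto simp: Field_def)

lemma rt_close_causal:
  assumes "Field E \<subseteq> V" shows "causal_graph (rt_close V E)"
proof -
  have F: "Field (rt_close V E) \<subseteq> V"
    using assms trancl_subset_Field2[of E] unfolding rt_close_def Field_def by auto
  have R: "\<forall>x\<in>Field (rt_close V E). (x,x) \<in> rt_close V E"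
    using F unfolding rt_close_def by auto
  have T: "trans (rt_close V E)"
    unfolding trans_def rt_close_def by (auto intro: trancl_trans)
  show ?thesis using R T by (simp add: causal_graph_def)
qed

lemma Field_rt_close:
  assumes "Field E \<subseteq> V" shows "Field (rt_close V E) = V"
proof
  show "Field (rt_close V E) \<subseteq> V"
    using assms trancl_subset_Field2[of E] unfolding rt_close_def Field_def by auto
  show "V \<subseteq> Field (rt_close V E)"
    unfolding rt_close_def Field_def by auto
qed

lemma rt_close_mono: "V \<subseteq> V' \<Longrightarrow> E \<subseteq> E' \<Longrightarrow> rt_close V E \<subseteq> rt_close V' E'"
  unfolding rt_close_def using trancl_mono by blast

lemma rt_close_sup: "E \<subseteq> rt_close V E"
  unfolding rt_close_def by auto

lemma rt_close_least:
  assumes "causal_graph G" "E \<subseteq> G" "V \<subseteq> Field G"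
  shows "rt_close V E \<subseteq> G"
proof -
  have "trans G" using assms(1) by (simp add: causal_graph_def)
  hence "E\<^sup>+ \<subseteq> G" using assms(2) trancl_mono trancl_id
    by (metis subsetI)
  moreover have "Id_on V \<subseteq> G" using assms(1,3) by (auto simp: causal_graph_def)
  ultimately show ?thesis unfolding rt_close_def by auto
qed

lemma Field_cg_star: "Field (cg_star a b) = Field a \<union> Field b"
  unfolding cg_star_def cvertices_def by (rule Field_rt_close) (auto simp: Field_Un)

lemma cg_star_causal: "causal_graph (cg_star a b)"
  unfolding cg_star_def cvertices_def by (rule rt_close_causal) (auto simp: Field_Un)

lemma Field_prod_sub: "Field (a \<union> b \<union> Field a \<times> Field b) \<subseteq> Field a \<union> Field b"
  unfolding Field_def by auto

lemma cg_dot_causal: "causal_graph (cg_dot a b)"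
  unfolding cg_dot_def cvertices_def
  by (rule rt_close_causal) (rule Field_prod_sub)

lemma Field_cg_dot: "Field (cg_dot a b) = Field a \<union> Field b"
  unfolding cg_dot_def cvertices_def
  by (rule Field_rt_close) (rule Field_prod_sub)

lemma cg_star_mono: "a \<subseteq> a' \<Longrightarrow> b \<subseteq> b' \<Longrightarrow> cg_star a b \<subseteq> cg_star a' b'"
  unfolding cg_star_def cvertices_def
  by (intro rt_close_mono) (use mono_Field in blast)+

lemma cg_dot_mono: "a \<subseteq> a' \<Longrightarrow> b \<subseteq> b' \<Longrightarrow> cg_dot a b \<subseteq> cg_dot a' b'"
  unfolding cg_dot_def cvertices_def
  apply (intro rt_close_mono)
   apply (use mono_Field in blast)
  using mono_Field by blast

lemma cg_star_sub1: "a \<subseteq> cg_star a b"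
  unfolding cg_star_def using rt_close_sup[of "a \<union> b"] by blast

lemma cg_star_sub2: "b \<subseteq> cg_star a b"
  unfolding cg_star_def using rt_close_sup[of "a \<union> b"] by blast

lemma cg_dot_sub1: "a \<subseteq> cg_dot a b"
  unfolding cg_dot_def using rt_close_sup[of "a \<union> b \<union> cvertices a \<times> cvertices b"] by blast

lemma cg_star_least: "causal_graph G \<Longrightarrow> a \<subseteq> G \<Longrightarrow> b \<subseteq> G \<Longrightarrow> cg_star a b \<subseteq> G"
  unfolding cg_star_def cvertices_def
  apply (rule rt_close_least, assumption, blast)
  using mono_Field[of a G] mono_Field[of b G] by auto

lemma causal_single: "causal_graph {(t,t)}"
  by (auto simp: causal_graph_def trans_def Field_def)

fun Stars :: "'l cgraph set list \<Rightarrow> 'l cgraph set" where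
  "Stars [] = {{}}"
| "Stars (A#As) = {cg_star g S | g S. g \<in> A \<and> S \<in> Stars As}"

fun Gen :: "('a,'l) program \<Rightarrow> nat \<Rightarrow> 'a \<Rightarrow> 'l cgraph set" where
  "Gen P 0 q = {}"
| "Gen P (Suc n) q = {cg_dot S {(t,t)} | r t S. r \<in> P \<and> rhead r = q \<and> rlabel r = Some t
        \<and> S \<in> Stars (map (Gen P n) (rpos r))}"

lemma Stars_causal: "S \<in> Stars As \<Longrightarrow> causal_graph S"
  apply (cases As)
   apply (simp add: causal_graph_def trans_def)
  apply (auto intro: cg_star_causal)
  done

lemma Gen_causal: assumes "g \<in> Gen P n q" shows "causal_graph g"
proof (cases n)
  case 0
  then show ?thesis using assms by simp
next
  case (Suc m)
  then obtain S t where "g = cg_dot S {(t,t)}" using assms by auto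
  then show ?thesis by (simp add: cg_dot_causal)
qed

lemma down_Int: "down A \<inter> down B = down {cg_star a b |a b. a\<in>A \<and> b\<in>B}"
proof
  show "down A \<inter> down B \<subseteq> down {cg_star a b |a b. a\<in>A \<and> b\<in>B}"
  proof
    fix G assume "G \<in> down A \<inter> down B"
    then obtain a b where "causal_graph G" "a \<in> A" "b \<in> B" "a \<subseteq> G" "b \<subseteq> G"
      unfolding down_def cg_le_def by blast
    moreover have "cg_star a b \<subseteq> G" using calculation cg_star_least by blast
    ultimately show "G \<in> down {cg_star a b |a b. a\<in>A \<and> b\<in>B}"
      unfolding down_def cg_le_def by blast
  qed
next
  show "down {cg_star a b |a b. a\<in>A \<and> b\<in>B} \<subseteq> down A \<inter> down B"
  proof
    fix G assume "G \<in> down {cg_star a b |a b. a\<in>A \<and> b\<in>B}"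
    then obtain a b where "causal_graph G" "a \<in> A" "b \<in> B" "cg_star a b \<subseteq> G"
      unfolding down_def cg_le_def by blast
    moreover have "a \<subseteq> G" "b \<subseteq> G" using calculation(4) cg_star_sub1 cg_star_sub2 by blast+
    ultimately show "G \<in> down A \<inter> down B"
      unfolding down_def cg_le_def by blast
  qed
qed

lemma body_val_Gen:
  "body_val (\<lambda>b. down (F b)) bs = down (Stars (map F bs))"
proof (induction bs)
  case Nil
  show ?case by (auto simp: body_val_def cv_one_def down_def cg_le_def)
next
  case (Cons b bs)
  have "body_val (\<lambda>b. down (F b)) (b#bs) = cv_times (down (F b)) (body_val (\<lambda>b. down (F b)) bs)"
    by (simp add: body_val_def)
  also have "\<dots> = down (F b) \<inter> down (Stars (map F bs))" using Cons by (simp add: cv_times_def)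
  also have "\<dots> = down (Stars (map F (b#bs)))" by (simp add: down_Int)
  finally show ?case .
qed

lemma cv_prod_label:
  assumes "\<forall>s\<in>S. causal_graph s"
  shows "cv_prod (down S) (cv_label t) = down {cg_dot s {(t,t)} | s. s \<in> S}"
proof
  show "cv_prod (down S) (cv_label t) \<subseteq> down {cg_dot s {(t,t)} | s. s \<in> S}"
  proof
    fix G assume "G \<in> cv_prod (down S) (cv_label t)"
    then obtain a b where G: "causal_graph G" "cg_dot a b \<subseteq> G" "a \<in> down S" "b \<in> cv_label t"
      unfolding cv_prod_def down_def cg_le_def by blast
    then obtain s where s: "s \<in> S" "s \<subseteq> a" unfolding down_def cg_le_def by blast
    have "{(t,t)} \<subseteq> b" using G(4) unfolding cv_label_def down_def cg_le_def by blast
    hence "cg_dot s {(t,t)} \<subseteq> G" using cg_dot_mono[OF s(2)] G(2) by blast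
    thus "G \<in> down {cg_dot s {(t,t)} | s. s \<in> S}" using G(1) s(1) unfolding down_def cg_le_def by blast
  qed
next
  show "down {cg_dot s {(t,t)} | s. s \<in> S} \<subseteq> cv_prod (down S) (cv_label t)"
  proof
    fix G assume "G \<in> down {cg_dot s {(t,t)} | s. s \<in> S}"
    then obtain s where s: "causal_graph G" "s \<in> S" "cg_dot s {(t,t)} \<subseteq> G"
      unfolding down_def cg_le_def by blast
    have "s \<in> down S" using s(2) assms unfolding down_def cg_le_def by auto
    moreover have "{(t,t)} \<in> cv_label t" using causal_single unfolding cv_label_def down_def cg_le_def by auto
    ultimately have "cg_dot s {(t,t)} \<in> {cg_dot G G' | G G'. G \<in> down S \<and> G' \<in> cv_label t}"
      by blast
    thus "G \<in> cv_prod (down S) (cv_label t)"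
      using s(1,3) unfolding cv_prod_def down_def[of "{cg_dot G G' | G G'. G \<in> down S \<and> G' \<in> cv_label t}"] cg_le_def
      by blast
  qed
qed

lemma TP_iter_Gen:
  assumes cl: "completely_labelled P"
  shows "TP_iter P n q = down (Gen P n q)"
proof (induction n arbitrary: q)
  case 0
  show ?case by (simp add: cv_zero_def down_def)
next
  case (Suc n)
  have I: "TP_iter P n = (\<lambda>b. down (Gen P n b))" using Suc by auto
  have RV: "rule_val (\<lambda>b. down (Gen P n b)) r = down {cg_dot s {(t,t)} | s. s \<in> Stars (map (Gen P n) (rpos r))}"
    if "rlabel r = Some t" for r t
    using that by (simp add: rule_val_def body_val_Gen cv_prod_label Stars_causal)
  show ?case
  proof (rule set_eqI)
    fix G
    have "G \<in> TP_iter P (Suc n) q \<longleftrightarrow> (\<exists>r\<in>P. rhead r = q \<and> G \<in> rule_val (\<lambda>b. down (Gen P n b)) r)"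
      by (auto simp: I TP_def)
    also have "\<dots> \<longleftrightarrow> (\<exists>r\<in>P. \<exists>t. rhead r = q \<and> rlabel r = Some t \<and>
         G \<in> down {cg_dot s {(t,t)} | s. s \<in> Stars (map (Gen P n) (rpos r))})" (is "?A \<longleftrightarrow> ?B")
    proof
      assume ?A
      then obtain r where r: "r \<in> P" "rhead r = q" "G \<in> rule_val (\<lambda>b. down (Gen P n b)) r" by blast
      obtain t where t: "rlabel r = Some t" using cl r(1) unfolding completely_labelled_def by blast
      show ?B using r t RV[OF t] by blast
    next
      assume ?B
      then obtain r t where r: "r \<in> P" "rhead r = q" "rlabel r = Some t"
        "G \<in> down {cg_dot s {(t,t)} | s. s \<in> Stars (map (Gen P n) (rpos r))}" by blast
      show ?A using r RV[OF r(3)] by blast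
    qed
    also have "\<dots> \<longleftrightarrow> G \<in> down (Gen P (Suc n) q)"
    proof
      assume ?B
      then obtain r t s where r: "r \<in> P" "rhead r = q" "rlabel r = Some t"
        "s \<in> Stars (map (Gen P n) (rpos r))" "causal_graph G" "cg_dot s {(t,t)} \<subseteq> G"
        unfolding down_def cg_le_def by blast
      have "cg_dot s {(t,t)} \<in> Gen P (Suc n) q" using r(1-4) by auto
      thus "G \<in> down (Gen P (Suc n) q)" using r(5,6) unfolding down_def cg_le_def by blast
    next
      assume "G \<in> down (Gen P (Suc n) q)"
      then obtain H where H: "causal_graph G" "H \<in> Gen P (Suc n) q" "H \<subseteq> G"
        unfolding down_def cg_le_def by blast
      from H(2) obtain r t s where r: "r \<in> P" "rhead r = q" "rlabel r = Some t"
        "s \<in> Stars (map (Gen P n) (rpos r))" "H = cg_dot s {(t,t)}" by auto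
      show ?B unfolding down_def cg_le_def using r H by blast
    qed
    finally show "G \<in> TP_iter P (Suc n) q \<longleftrightarrow> G \<in> down (Gen P (Suc n) q)" .
  qed
qed

lemma Stars_mono: "(\<And>b. F b \<subseteq> F' b) \<Longrightarrow> Stars (map F bs) \<subseteq> Stars (map F' bs)"
proof (induction bs)
  case Nil show ?case by simp
next
  case (Cons b bs)
  show ?case using Cons.IH Cons.prems by simp blast
qed

lemma Gen_Suc_mono: "Gen P n q \<subseteq> Gen P (Suc n) q"
proof (induction n arbitrary: q)
  case 0 show ?case by simp
next
  case (Suc n)
  have "Stars (map (Gen P n) bs) \<subseteq> Stars (map (Gen P (Suc n)) bs)" for bs
    by (rule Stars_mono) (rule Suc.IH)
  thus ?case by (simp only: Gen.simps) blast
qed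

lemma Gen_mono: "m \<le> n \<Longrightarrow> Gen P m q \<subseteq> Gen P n q"
proof (induction n)
  case 0 thus ?case by simp
next
  case (Suc n)
  show ?case
  proof (cases "m = Suc n")
    case False
    hence "m \<le> n" using Suc.prems by simp
    from Suc.IH[OF this] show ?thesis using Gen_Suc_mono[of P n q] by (rule subset_trans)
  qed simp
qed

lemma Field_Stars:
  "S \<in> Stars (map F bs) \<Longrightarrow> t \<in> Field S \<Longrightarrow> \<exists>b\<in>set bs. \<exists>g\<in>F b. g \<subseteq> S \<and> t \<in> Field g"
proof (induction bs arbitrary: S)
  case Nil thus ?case by simp
next
  case (Cons b bs)
  then obtain g S0 where gS: "S = cg_star g S0" "g \<in> F b" "S0 \<in> Stars (map F bs)" by auto
  show ?case
  proof (cases "t \<in> Field g")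
    case True
    have "g \<subseteq> S" using gS(1) cg_star_sub1[of g S0] by simp
    hence "\<exists>g\<in>F b. g \<subseteq> S \<and> t \<in> Field g" using True gS(2) by blast
    thus ?thesis by (rule bexI[OF _ list.set_intros(1)])
  next
    case False
    have "t \<in> Field g \<union> Field S0" using Cons.prems(2) gS(1) Field_cg_star[of g S0] by simp
    hence "t \<in> Field S0" using False by blast
    then obtain b' g' where "b' \<in> set bs" "g' \<in> F b'" "g' \<subseteq> S0" "t \<in> Field g'"
      using Cons.IH gS(3) by blast
    moreover have "S0 \<subseteq> S" using gS(1) cg_star_sub2[of S0 g] by simp
    ultimately have "\<exists>g\<in>F b'. g \<subseteq> S \<and> t \<in> Field g" by blast
    thus ?thesis by (rule bexI[OF _ list.set_intros(2)[OF \<open>b' \<in> set bs\<close>]])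
  qed
qed

lemma Field_label: "Field {(t,t)} = {t}" by (auto simp: Field_def)

lemma Gen_label_sub:
  assumes cl: "completely_labelled P"
  shows "g \<in> Gen P n q \<Longrightarrow> t \<in> Field g \<Longrightarrow> r \<in> P \<Longrightarrow> rlabel r = Some t
         \<Longrightarrow> \<exists>j\<le>n. \<exists>g''\<in>Gen P j (rhead r). g'' \<subseteq> g"
proof (induction n arbitrary: q g)
  case 0 thus ?case by simp
next
  case (Suc n)
  from Suc.prems(1) obtain r' t' S where r': "r' \<in> P" "rhead r' = q" "rlabel r' = Some t'"
    "S \<in> Stars (map (Gen P n) (rpos r'))" "g = cg_dot S {(t',t')}" by auto
  show ?case
  proof (cases "t = t'")
    case True
    hence "r = r'" using cl r'(1,3) Suc.prems(3,4) unfolding completely_labelled_def by metis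
    thus ?thesis using Suc.prems(1) r'(2) by blast
  next
    case False
    have "t \<in> Field S \<union> {t'}" using Suc.prems(2) r'(5) Field_cg_dot[of S "{(t',t')}"] Field_label[of t'] by simp
    hence "t \<in> Field S" using False by blast
    then obtain b gb where gb: "gb \<in> Gen P n b" "gb \<subseteq> S" "t \<in> Field gb"
      using Field_Stars[OF r'(4) \<open>t \<in> Field S\<close>] by blast
    obtain j g'' where "j \<le> n" "g'' \<in> Gen P j (rhead r)" "g'' \<subseteq> gb"
      using Suc.IH[OF gb(1) gb(3) Suc.prems(3,4)] by blast
    moreover have "S \<subseteq> g" using r'(5) cg_dot_sub1[of S "{(t',t')}"] by simp
    ultimately have "g'' \<subseteq> g" "j \<le> Suc n" using gb(2) by auto
    thus ?thesis using \<open>g'' \<in> Gen P j (rhead r)\<close> by blast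
  qed
qed

lemma simple_path_mono: "G \<subseteq> G' \<Longrightarrow> simple_path G vs \<Longrightarrow> simple_path G' vs"
  unfolding simple_path_def cvertices_def
  using mono_Field[of G G'] by (auto elim: successively_mono)

lemma height_mono: "G \<subseteq> G' \<Longrightarrow> height G \<le> height G'"
  unfolding height_def
  by (rule Sup_subset_mono) (use simple_path_mono in blast)

lemma path_height: "simple_path G vs \<Longrightarrow> enat (length vs) \<le> height G"
  unfolding height_def by (rule Sup_upper) blast

lemma height_ge:
  assumes "enat J \<le> height S" "J > 0"
  shows "\<exists>vs. simple_path S vs \<and> J \<le> length vs"
proof -
  have "enat (J - 1) < Sup {enat (length vs) | vs. simple_path S vs}"
  proof -
    have "enat (J - 1) < enat J" using assms(2) by simp
    also have "\<dots> \<le> height S" by (rule assms(1))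
    finally show ?thesis unfolding height_def .
  qed
  then obtain x where "x \<in> {enat (length vs) | vs. simple_path S vs}" "enat (J - 1) < x"
    using less_Sup_iff by blast
  thus ?thesis using assms(2) by auto
qed

lemma height_dot:
  assumes "t \<notin> Field S" "enat J \<le> height S"
  shows "enat (Suc J) \<le> height (cg_dot S {(t,t)})"
proof -
  let ?g = "cg_dot S {(t,t)}"
  have FS: "Field ?g = Field S \<union> {t}" using Field_cg_dot[of S "{(t,t)}"] Field_label[of t] by simp
  have tt: "(x, t) \<in> ?g" if "x \<in> Field S \<union> {t}" for x
  proof -
    have "(x,t) \<in> S \<union> {(t,t)} \<union> cvertices S \<times> cvertices {(t,t)}"
      using that by (auto simp: cvertices_def Field_label)
    thus ?thesis unfolding cg_dot_def
      using rt_close_sup[of "S \<union> {(t,t)} \<union> cvertices S \<times> cvertices {(t,t)}"] by blast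
  qed
  show ?thesis
  proof (cases "J = 0")
    case True
    have "simple_path ?g [t]" unfolding simple_path_def cvertices_def FS by simp
    from path_height[OF this] True show ?thesis by (simp add: one_enat_def)
  next
    case False
    then obtain vs where vs: "simple_path S vs" "J \<le> length vs" using height_ge[OF assms(2)] by blast
    have sv: "set vs \<subseteq> Field S" using vs(1) unfolding simple_path_def cvertices_def by blast
    have sp: "simple_path ?g (vs @ [t])"
      unfolding simple_path_def cvertices_def FS
    proof (intro conjI)
      show "distinct (vs @ [t])" using vs(1) sv assms(1) unfolding simple_path_def by auto
      show "set (vs @ [t]) \<subseteq> Field S \<union> {t}" using sv by auto
      have "successively (\<lambda>x y. (x, y) \<in> ?g) vs"
        using vs(1) cg_dot_sub1[of S "{(t,t)}"] unfolding simple_path_def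
        by (auto elim: successively_mono)
      moreover have "last vs \<in> Field S" using vs(1) sv unfolding simple_path_def by auto
      ultimately show "successively (\<lambda>x y. (x, y) \<in> ?g) (vs @ [t])"
        using tt by (auto simp: successively_append_iff)
    qed simp
    have "enat (Suc J) \<le> enat (Suc (length vs))" using vs(2) by simp
    also have "\<dots> \<le> height ?g" using path_height[OF sp] by simp
    finally show ?thesis .
  qed
qed


lemma Stars_rebuild:
  assumes "S \<in> Stars (map (Gen P n) bs)"
    and "\<forall>b\<in>set bs. \<forall>g\<in>Gen P n b. \<exists>j g'. g' \<in> Gen P j b \<and> g' \<subseteq> g \<and> enat j \<le> height g'"
  shows "\<exists>J S'. S' \<in> Stars (map (Gen P J) bs) \<and> S' \<subseteq> S \<and> enat J \<le> height S'"
  using assms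
proof (induction bs arbitrary: S)
  case Nil
  thus ?case by (intro exI[of _ 0] exI[of _ "{}"]) (simp add: zero_enat_def[symmetric])
next
  case (Cons b bs)
  from Cons.prems(1) obtain g S0 where gS: "S = cg_star g S0" "g \<in> Gen P n b"
    "S0 \<in> Stars (map (Gen P n) bs)" by auto
  obtain j g' where g': "g' \<in> Gen P j b" "g' \<subseteq> g" "enat j \<le> height g'"
    using Cons.prems(2) gS(2) by auto
  have "\<forall>b\<in>set bs. \<forall>g\<in>Gen P n b. \<exists>j g'. g' \<in> Gen P j b \<and> g' \<subseteq> g \<and> enat j \<le> height g'"
    using Cons.prems(2) by simp
  then obtain J0 S0' where S0': "S0' \<in> Stars (map (Gen P J0) bs)" "S0' \<subseteq> S0" "enat J0 \<le> height S0'"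
    using Cons.IH[OF gS(3)] by blast
  define J where "J = max j J0"
  have "g' \<in> Gen P J b" using g'(1) Gen_mono[of j J P b] unfolding J_def by auto
  moreover have "S0' \<in> Stars (map (Gen P J) bs)"
    using S0'(1) Stars_mono[of "Gen P J0" "Gen P J" bs] Gen_mono[of J0 J P] unfolding J_def by auto
  ultimately have mem: "cg_star g' S0' \<in> Stars (map (Gen P J) (b#bs))" by auto
  have sub: "cg_star g' S0' \<subseteq> S" using gS(1) cg_star_mono[OF g'(2) S0'(2)] by simp
  have "height g' \<le> height (cg_star g' S0')" by (rule height_mono[OF cg_star_sub1])
  moreover have "height S0' \<le> height (cg_star g' S0')" by (rule height_mono[OF cg_star_sub2])
  ultimately have "enat J \<le> height (cg_star g' S0')" using g'(3) S0'(3) unfolding J_def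
    by (cases "j \<le> J0") (auto simp: max_def)
  thus ?case using mem sub by blast
qed

lemma Gen_main:
  assumes cl: "completely_labelled P"
  shows "g \<in> Gen P n q \<Longrightarrow> \<exists>j g'. g' \<in> Gen P j q \<and> g' \<subseteq> g \<and> enat j \<le> height g'"
proof (induction n arbitrary: q g rule: less_induct)
  case (less n)
  show ?case
  proof (cases n)
    case 0 thus ?thesis using less.prems by simp
  next
    case (Suc m)
    from less.prems Suc obtain r t S where r: "r \<in> P" "rhead r = q" "rlabel r = Some t"
      "S \<in> Stars (map (Gen P m) (rpos r))" "g = cg_dot S {(t,t)}" by auto
    have Sg: "S \<subseteq> g" using r(5) cg_dot_sub1[of S "{(t,t)}"] by simp
    show ?thesis
    proof (cases "t \<in> Field S")
      case True
      then obtain b gb where gb: "gb \<in> Gen P m b" "gb \<subseteq> S" "t \<in> Field gb"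
        using Field_Stars[OF r(4) True] by blast
      obtain j g'' where j: "j \<le> m" "g'' \<in> Gen P j q" "g'' \<subseteq> gb"
        using Gen_label_sub[OF cl gb(1) gb(3) r(1) r(3)] r(2) by blast
      have "j < n" using j(1) Suc by simp
      from less.IH[OF this j(2)] obtain j' g' where
        "g' \<in> Gen P j' q" "g' \<subseteq> g''" "enat j' \<le> height g'" by blast
      moreover have "g'' \<subseteq> g" using j(3) gb(2) Sg by blast
      ultimately show ?thesis by blast
    next
      case False
      have "\<forall>b\<in>set (rpos r). \<forall>g\<in>Gen P m b. \<exists>j g'. g' \<in> Gen P j b \<and> g' \<subseteq> g \<and> enat j \<le> height g'"
        using less.IH Suc by blast
      then obtain J S' where S': "S' \<in> Stars (map (Gen P J) (rpos r))" "S' \<subseteq> S" "enat J \<le> height S'"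
        using Stars_rebuild[OF r(4)] by blast
      have mem: "cg_dot S' {(t,t)} \<in> Gen P (Suc J) q" using r(1-3) S'(1) by auto
      have sub: "cg_dot S' {(t,t)} \<subseteq> g" using r(5) cg_dot_mono[OF S'(2), of "{(t,t)}" "{(t,t)}"] by simp
      have "t \<notin> Field S'" using False mono_Field[OF S'(2)] by blast
      from height_dot[OF this S'(3)] mem sub show ?thesis by blast
    qed
  qed
qed

lemma TP_iter_mono:
  assumes cl: "completely_labelled P" and "m \<le> n"
  shows "TP_iter P m q \<subseteq> TP_iter P n q"
proof
  fix G assume "G \<in> TP_iter P m q"
  then obtain H where "causal_graph G" "H \<in> Gen P m q" "cg_le G H"
    unfolding TP_iter_Gen[OF cl] down_def by blast
  moreover have "H \<in> Gen P n q" using Gen_mono[OF assms(2), of P q] calculation(2) by blast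
  ultimately show "G \<in> TP_iter P n q"
    unfolding TP_iter_Gen[OF cl] down_def by blast
qed

theorem mainTheorem18:
  fixes P :: "('a, 'l) program" and p :: 'a and k :: enat
    and G :: "'l cgraph" and h :: nat
  assumes "positive P"
    and "completely_labelled P"
    and "k \<ge> 1"
    and "cg_maximal_in G (TP_up P k p)"
    and "height G = enat h"
    and "enat h \<le> k"
  shows "G \<in> TP_iter P h p"
proof -
  note cl = assms(2)
  have GU: "G \<in> TP_up P k p" and maxG: "\<forall>G'\<in>TP_up P k p. G' \<subseteq> G \<longrightarrow> G \<subseteq> G'"
    using assms(4) unfolding cg_maximal_in_def cg_le_def by auto
  obtain n where "G \<in> TP_iter P n p"
  proof (cases k)
    case (enat n) thus ?thesis using GU that by (simp add: TP_up_def)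
  next
    case infinity thus ?thesis using GU that by (auto simp: TP_up_def TP_omega_def)
  qed
  then obtain g where g: "g \<in> Gen P n p" "g \<subseteq> G" "causal_graph G"
    unfolding TP_iter_Gen[OF cl] down_def cg_le_def by blast
  obtain j g' where g': "g' \<in> Gen P j p" "g' \<subseteq> g" "enat j \<le> height g'"
    using Gen_main[OF cl g(1)] by blast
  have g'G: "g' \<subseteq> G" using g'(2) g(2) by blast
  have "height g' \<le> height G" by (rule height_mono[OF g'G])
  hence "enat j \<le> height G" using g'(3) by (rule order_trans[rotated])
  hence "enat j \<le> enat h" using assms(5) by simp
  hence jh: "j \<le> h" by simp
  have g'T: "g' \<in> TP_iter P j p"
    unfolding TP_iter_Gen[OF cl] down_def cg_le_def using g'(1) Gen_causal[OF g'(1)] by blast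
  have "g' \<in> TP_up P k p"
  proof (cases k)
    case (enat n')
    hence "j \<le> n'" using jh assms(6) by simp
    thus ?thesis using g'T TP_iter_mono[OF cl] enat by (auto simp: TP_up_def)
  next
    case infinity thus ?thesis using g'T by (auto simp: TP_up_def TP_omega_def)
  qed
  hence "G \<subseteq> g'" using maxG g'G by blast
  hence "G = g'" using g'G by blast
  thus ?thesis using g'T TP_iter_mono[OF cl jh] by blast
qed

end
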